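(* Let $p\in(0,1)$, $d\ge2$ and $N\ge1$ be integers (with $p$ real), $t\in\mathbb{Z}_{\ge0}$, and $y_i=-d(i-1)$, $i=1,\dots,N$. For integers $k\ge0$ and $x\in\mathbb{Z}$ let $$F_{-k}(x,t)=(1-p)^t\frac{(-1)^k}{2\pi i}\oint_{\Gamma_0}\frac{dw}{w}\Big(1+\frac{p}{1-p}w\Big)^t\frac{(1-w)^k}{w^{x+k}},$$ and for $1\le n\le N$, $0\le k\le n-1$, let $\Psi^n_k(x)=(-1)^kF_{-k}(x-y_{n-k},t)$. Put $z=x+d(n-1)$. Then $$\Psi^n_k(x)=\frac{(-1)^k}{2\pi i}\oint_{\Gamma_0}\frac{dw}{w^{z+1}}(1+p(w-1))^t\big((w-1)w^{d-1}\big)^k,$$ and the functions $$\Phi^n_k(x)=\frac{(-1)^k}{2\pi i}\oint_{\Gamma_0}\frac{dv}{v}\,\frac{1+dv}{(1+pv)^t}\,\frac{(1+v)^{z-1}}{(v(1+v)^{d-1})^k},\qquad k=0,\dots,n-1,$$ are polynomials in $x$ of degree at most $n-1$ satisfying $\sum_{x\in\mathbb{Z}}\Phi^n_j(x)\Psi^n_k(x)=\delta_{j,k}$ for $0\le j,k\le n-1$.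
   Context: $\Gamma_0$ denotes any anticlockwise simple loop enclosing only the pole at $0$ of the respective integrand (in particular not enclosing $w=1$, $v=-1$, or $v=-1/p$). *)

theory Defs
  imports "HOL-Complex_Analysis.Complex_Analysis"
begin

text \<open>The normalised contour integral (1/(2 pi i)) over Gamma_0 (an anticlockwise simple loop
  enclosing only the pole at 0) equals the residue at 0; Isabelle's residue is literally
  defined as the normalised integral over small circles around 0.\<close>

definition Fneg :: "real \<Rightarrow> nat \<Rightarrow> nat \<Rightarrow> int \<Rightarrow> complex" where
  "Fneg p t k x = complex_of_real ((1 - p) ^ t) * (-1) ^ k *
     residue (\<lambda>w. (1 / w) * (1 + complex_of_real (p / (1 - p)) * w) ^ t * (1 - w) ^ k
                    / w powi (x + int k)) 0"

definition yy :: "nat \<Rightarrow> nat \<Rightarrow> int" where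
  "yy d i = - int d * (int i - 1)"

definition Psi :: "real \<Rightarrow> nat \<Rightarrow> nat \<Rightarrow> nat \<Rightarrow> nat \<Rightarrow> int \<Rightarrow> complex" where
  "Psi p d t n k x = (-1) ^ k * Fneg p t k (x - yy d (n - k))"

definition Phi :: "real \<Rightarrow> nat \<Rightarrow> nat \<Rightarrow> nat \<Rightarrow> nat \<Rightarrow> int \<Rightarrow> complex" where
  "Phi p d t n k x = (let z = x + int d * (int n - 1) in
     (-1) ^ k * residue (\<lambda>v. (1 / v) * (1 + of_nat d * v) / (1 + complex_of_real p * v) ^ t
        * (1 + v) powi (z - 1) / (v * (1 + v) ^ (d - 1)) ^ k) 0)"

end

theory Submission
  imports Defs "HOL-Computational_Algebra.Polynomial_FPS"
begin

unbundle fps_syntax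
notation fls_nth (infixl \<open>$$\<close> 75)

lemma fls_binom:
  "fps_to_fls (fps_binomial (of_int m :: complex)) = (1 + fls_X) powi m"
proof (cases "m \<ge> 0")
  case True
  then obtain n where m: "m = int n" by (metis nonneg_eq_int)
  show ?thesis using m
    by (simp add: fps_binomial_of_nat fps_to_fls_power)
next
  case False
  obtain n where m: "m = - int n" using False by (intro that[of "nat (-m)"]) auto
  have "fps_binomial (- of_nat n :: complex) * fps_binomial (of_nat n) = 1"
    by (simp flip: fps_binomial_add_mult)
  moreover have "fps_to_fls (fps_binomial (- of_nat n :: complex)) * (1 + fls_X) ^ n
     = fps_to_fls (fps_binomial (- of_nat n :: complex) * fps_binomial (of_nat n))"
    by (simp add: fls_times_fps_to_fls fps_binomial_of_nat fps_to_fls_power)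
  ultimately have "fps_to_fls (fps_binomial (- of_nat n :: complex)) * (1 + fls_X) ^ n = 1"
    by simp
  hence "fps_to_fls (fps_binomial (- of_nat n :: complex)) = inverse ((1 + fls_X) ^ n)"
    using inverse_unique[of "(1 + fls_X) ^ n" "fps_to_fls (fps_binomial (- of_nat n :: complex))"]
    by (simp add: mult.commute)
  thus ?thesis using m by (simp add: power_int_minus)
qed



lemma fls_div_X_power_residue:
  "fls_residue (f / fls_X ^ (Suc k) :: complex fls) = f $$ int k"
proof -
  have "fls_X ^ Suc k * fls_shift (int (Suc k)) f = f"
    by (simp only: fls_X_power_times_conv_shift fls_shift_fls_shift) simp
  hence "f / fls_X ^ Suc k = fls_shift (int (Suc k)) f"
    by (simp add: divide_eq_eq mult.commute)
  then show ?thesis by simp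
qed

lemma U_nz: "(1 + fls_X :: complex fls) \<noteq> 0"
proof
  assume "(1 + fls_X :: complex fls) = 0"
  hence "(1 + fls_X :: complex fls) $$ 0 = 0" by simp
  thus False by simp
qed

lemma Q_nz: "(1 + fls_const c * fls_X :: complex fls) \<noteq> 0"
proof
  assume "(1 + fls_const c * fls_X :: complex fls) = 0"
  hence "(1 + fls_const c * fls_X :: complex fls) $$ 0 = 0" by simp
  thus False by simp
qed

lemma Phi_residue:
  fixes p :: real and d t k :: nat and z :: int
  shows "residue (\<lambda>v. (1 / v) * (1 + of_nat d * v) / (1 + complex_of_real p * v) ^ t
        * (1 + v) powi (z - 1) / (v * (1 + v) ^ (d - 1)) ^ k) 0 =
    ((1 + fps_const (of_nat d) * fps_X) * inverse ((1 + fps_const (complex_of_real p) * fps_X) ^ t)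
       * fps_binomial (of_int (z - 1 - int (d - 1) * int k))) $ k"
proof -
  define X :: "complex fls" where "X = fls_X"
  define U where "U = 1 + X"
  define Q where "Q = (1 + fls_const (complex_of_real p) * X) ^ t"
  define A where "A = 1 + fls_const (of_nat d) * X"
  define m where "m = z - 1 - int (d - 1) * int k"
  have exp: "(\<lambda>v. (1 / v) * (1 + of_nat d * v) / (1 + complex_of_real p * v) ^ t
        * (1 + v) powi (z - 1) / (v * (1 + v) ^ (d - 1)) ^ k) has_laurent_expansion
      ((1 / X) * A / Q * U powi (z - 1) / (X * U ^ (d - 1)) ^ k)"
    unfolding X_def U_def Q_def A_def by (intro laurent_expansion_intros)
  have Unz: "U \<noteq> 0" unfolding U_def X_def by (rule U_nz)
  have Qnz: "Q \<noteq> 0" unfolding Q_def X_def using Q_nz by simp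
  have Xnz: "X \<noteq> 0" unfolding X_def by simp
  have sub: "subdegree ((1 + fps_const (complex_of_real p) * fps_X) ^ t) = 0"
    by (simp add: subdegree_eq_0_iff)
  have conv: "fps_to_fls ((1 + fps_const (of_nat d) * fps_X) * inverse ((1 + fps_const (complex_of_real p) * fps_X) ^ t)
       * fps_binomial (of_int m)) = A * inverse Q * U powi m"
    unfolding A_def Q_def U_def X_def
    by (simp add: fls_times_fps_to_fls fls_binom fps_to_fls_power flip: fls_inverse_fps_to_fls[OF sub])
  have zm: "z - 1 = m + int ((d - 1) * k)" unfolding m_def by simp
  have "U powi (z - 1) = U powi m * U powi int ((d - 1) * k)"
    unfolding zm using Unz by (rule power_int_add[OF disjI1])
  hence "U powi (z - 1) = U powi m * U ^ ((d - 1) * k)"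
    by (simp only: power_int_of_nat)
  hence "(1 / X) * A / Q * U powi (z - 1) / (X * U ^ (d - 1)) ^ k = (A * inverse Q * U powi m) / X ^ Suc k"
    using Unz Qnz Xnz by (simp add: field_simps power_mult_distrib flip: power_mult)
  hence "residue (\<lambda>v. (1 / v) * (1 + of_nat d * v) / (1 + complex_of_real p * v) ^ t
        * (1 + v) powi (z - 1) / (v * (1 + v) ^ (d - 1)) ^ k) 0 = fls_residue ((A * inverse Q * U powi m) / X ^ Suc k)"
    using has_laurent_expansion_residue_0[OF exp] by simp
  also have "\<dots> = (A * inverse Q * U powi m) $$ int k" unfolding X_def by (rule fls_div_X_power_residue)
  finally show ?thesis unfolding m_def[symmetric] by (simp flip: conv)
qed



lemma fls_const_add': "fls_const (a + b) = fls_const a + (fls_const b :: complex fls)"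
  by (simp add: fls_eq_iff)

lemma fls_const_diff': "fls_const (a - b) = fls_const a - (fls_const b :: complex fls)"
  by (simp add: fls_eq_iff)

lemma Psi_part1:
  fixes p :: real and d n k t :: nat and x :: int
  assumes "p < 1" "k < n" "d \<ge> 1"
  shows "Psi p d t n k x =
          (-1) ^ k * residue (\<lambda>w. (1 + complex_of_real p * (w - 1)) ^ t * ((w - 1) * w ^ (d - 1)) ^ k
                      / w powi (x + int d * (int n - 1) + 1)) 0"
proof -
  define X :: "complex fls" where "X = fls_X"
  define e1 where "e1 = x - yy d (n - k) + int k"
  define e2 where "e2 = x + int d * (int n - 1) + 1"
  define Cq where "Cq = fls_const (complex_of_real (p / (1 - p)))"
  define Cp where "Cp = fls_const (complex_of_real p)"
  define c where "c = complex_of_real ((1 - p) ^ t) * (-1) ^ k"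
  have exp1: "(\<lambda>w. (1 / w) * (1 + complex_of_real (p / (1 - p)) * w) ^ t * (1 - w) ^ k
                    / w powi e1) has_laurent_expansion ((1 / X) * (1 + Cq * X) ^ t * (1 - X) ^ k / X powi e1)"
    unfolding X_def Cq_def by (intro laurent_expansion_intros)
  have exp2: "(\<lambda>w. (1 + complex_of_real p * (w - 1)) ^ t * ((w - 1) * w ^ (d - 1)) ^ k
                      / w powi e2) has_laurent_expansion ((1 + Cp * (X - 1)) ^ t * ((X - 1) * X ^ (d - 1)) ^ k / X powi e2)"
    unfolding X_def Cp_def by (intro laurent_expansion_intros)
  have Xnz: "X \<noteq> 0" unfolding X_def by simp
  have e2: "e2 = e1 + 1 + int ((d - 1) * k)"
    using assms unfolding e1_def e2_def yy_def by (simp add: of_nat_diff algebra_simps)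
  have pe: "X powi e2 = X powi e1 * X * X ^ ((d - 1) * k)"
  proof -
    have "X powi e2 = X powi (e1 + 1) * X powi int ((d - 1) * k)"
      unfolding e2 using Xnz by (rule power_int_add[OF disjI1])
    also have "X powi (e1 + 1) = X powi e1 * X"
      using Xnz by (rule power_int_add_1[OF disjI1])
    finally show ?thesis by (simp only: power_int_of_nat)
  qed
  have p1: "1 - complex_of_real p \<noteq> 0" using assms(1)
    by (metis cancel_comm_monoid_add_class.diff_cancel diff_eq_diff_eq of_real_1 of_real_eq_iff order_less_irrefl)
  have h1: "fls_const (complex_of_real (1 - p)) * (1 + Cq * X) = 1 + Cp * (X - 1)"
  proof -
    have "complex_of_real (1 - p) * complex_of_real (p / (1 - p)) = complex_of_real p"
      using p1 by (simp add: field_simps)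
    hence a: "fls_const (complex_of_real (1 - p)) * Cq = Cp"
      unfolding Cq_def Cp_def by simp
    have b: "fls_const (complex_of_real (1 - p)) = 1 - Cp"
      unfolding Cp_def by (simp add: fls_const_diff')
    have "fls_const (complex_of_real (1 - p)) * (1 + Cq * X)
       = fls_const (complex_of_real (1 - p)) + (fls_const (complex_of_real (1 - p)) * Cq) * X"
      by (simp add: algebra_simps)
    also have "\<dots> = (1 - Cp) + Cp * X" by (simp only: a) (simp only: b)
    also have "\<dots> = 1 + Cp * (X - 1)" by (simp add: algebra_simps)
    finally show ?thesis .
  qed
  have "fls_const c * ((1 / X) * (1 + Cq * X) ^ t * (1 - X) ^ k / X powi e1)
      = (fls_const (complex_of_real (1 - p)) * (1 + Cq * X)) ^ t * ((-1) * (1 - X)) ^ k / (X * X powi e1)"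
  proof -
    have hc: "fls_const c = fls_const (complex_of_real (1 - p)) ^ t * (-1) ^ k"
      unfolding c_def by (simp add: fls_const_power flip: fls_const_mult_const)
    have "fls_const c * ((1 / X) * (1 + Cq * X) ^ t * (1 - X) ^ k / X powi e1)
      = (fls_const (complex_of_real (1 - p)) ^ t * (1 + Cq * X) ^ t) * ((-1) ^ k * (1 - X) ^ k) / (X * X powi e1)"
      unfolding hc using Xnz by (simp add: divide_simps mult_ac)
    thus ?thesis by (simp only: power_mult_distrib)
  qed
  also have "\<dots> = (1 + Cp * (X - 1)) ^ t * ((X - 1) * X ^ (d - 1)) ^ k / X powi e2"
  proof -
    have m1: "(-1) * (1 - X) = X - 1" by simp
    have m2: "((X - 1) * X ^ (d - 1)) ^ k = (X - 1) ^ k * X ^ ((d - 1) * k)"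
      by (simp add: power_mult_distrib power_mult)
    have Znz: "X ^ ((d - 1) * k) \<noteq> 0" using Xnz by simp
    have "(1 + Cp * (X - 1)) ^ t * ((X - 1) * X ^ (d - 1)) ^ k / X powi e2
      = ((1 + Cp * (X - 1)) ^ t * (X - 1) ^ k) * X ^ ((d - 1) * k) / ((X * X powi e1) * X ^ ((d - 1) * k))"
      unfolding m2 pe by (simp add: mult_ac)
    also have "\<dots> = ((1 + Cp * (X - 1)) ^ t * (X - 1) ^ k) / (X * X powi e1)"
      using Znz by (rule mult_divide_mult_cancel_right)
    finally show ?thesis unfolding h1 m1 by simp
  qed
  finally have eq: "fls_const c * ((1 / X) * (1 + Cq * X) ^ t * (1 - X) ^ k / X powi e1)
      = (1 + Cp * (X - 1)) ^ t * ((X - 1) * X ^ (d - 1)) ^ k / X powi e2" .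
  have "Psi p d t n k x = (-1) ^ k * (c * fls_residue ((1 / X) * (1 + Cq * X) ^ t * (1 - X) ^ k / X powi e1))"
    unfolding Psi_def Fneg_def c_def e1_def[symmetric] has_laurent_expansion_residue_0[OF exp1]
    by simp
  also have "\<dots> = (-1) ^ k * fls_residue ((1 + Cp * (X - 1)) ^ t * ((X - 1) * X ^ (d - 1)) ^ k / X powi e2)"
    by (simp only: eq flip: fls_residue_fls_const_times(1))
  finally show ?thesis unfolding e2_def[symmetric] has_laurent_expansion_residue_0[OF exp2] .
qed



lemma poly_has_fps_expansion: "poly (P :: complex poly) has_fps_expansion fps_of_poly P"
  by (simp add: has_fps_expansion_def)

lemma fls_X_intpow_inverse: "inverse (fls_X_intpow i :: complex fls) = fls_X_intpow (-i)"
proof -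
  have "fls_X_intpow i * fls_X_intpow (-i) = (1 :: complex fls)"
    using fls_X_intpow_times_fls_X_intpow[of i "-i", where ?'a=complex] by simp
  thus ?thesis by (rule inverse_unique)
qed

lemma poly_residue:
  fixes P :: "complex poly" and e :: int
  shows "residue (\<lambda>w. poly P w / w powi e) 0 = (if e \<ge> 1 then coeff P (nat (e - 1)) else 0)"
proof -
  have exp: "(\<lambda>w. poly P w / w powi e) has_laurent_expansion (fps_to_fls (fps_of_poly P) / fls_X_intpow e)"
    by (intro laurent_expansion_intros has_laurent_expansion_fps poly_has_fps_expansion)
  have "fps_to_fls (fps_of_poly P) / fls_X_intpow e = fls_shift e (fps_to_fls (fps_of_poly P))"
    using fls_X_intpow_times_conv_shift(2)[of "fps_to_fls (fps_of_poly P)" "-e"]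
    by (simp add: divide_inverse fls_X_intpow_inverse)
  thus ?thesis using has_laurent_expansion_residue_0[OF exp] by simp
qed

definition Apoly :: "real \<Rightarrow> nat \<Rightarrow> nat \<Rightarrow> nat \<Rightarrow> complex poly" where
  "Apoly p d t k = [:1 - complex_of_real p, complex_of_real p:] ^ t * ([:-1, 1:] * monom 1 (d - 1)) ^ k"

lemma poly_Apoly: "poly (Apoly p d t k) w = (1 + complex_of_real p * (w - 1)) ^ t * ((w - 1) * w ^ (d - 1)) ^ k"
  by (simp add: Apoly_def poly_monom algebra_simps)

lemma Psi_coeff:
  fixes p :: real and d n k t :: nat and x :: int
  assumes "p < 1" "k < n" "d \<ge> 1"
  shows "Psi p d t n k x = (-1) ^ k * (if x + int d * (int n - 1) \<ge> 0
           then coeff (Apoly p d t k) (nat (x + int d * (int n - 1))) else 0)"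
proof -
  have "Psi p d t n k x = (-1) ^ k * residue (\<lambda>w. poly (Apoly p d t k) w
                      / w powi (x + int d * (int n - 1) + 1)) 0"
    unfolding Psi_part1[OF assms] poly_Apoly ..
  thus ?thesis by (simp add: poly_residue)
qed



lemma gchoose_poly: "\<exists>Q :: complex poly. degree Q \<le> j \<and> (\<forall>y. poly Q y = (y + c) gchoose j)"
proof (intro exI conjI allI)
  define Q where "Q = smult (1 / fact j) (\<Prod>l\<in>{0..<j}. [:c - of_nat l, 1 :: complex:])"
  show "degree Q \<le> j"
  proof -
    have "degree Q \<le> degree (\<Prod>l\<in>{0..<j}. [:c - of_nat l, 1 :: complex:])"
      unfolding Q_def by (rule degree_smult_le)
    also have "\<dots> \<le> (\<Sum>l\<in>{0..<j}. degree [:c - of_nat l, 1 :: complex:])"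
      using degree_prod_sum_le[of "{0..<j}" "\<lambda>l. [:c - of_nat l, 1 :: complex:]"] by (simp add: o_def)
    also have "\<dots> = j" by simp
    finally show ?thesis .
  qed
  fix y
  show "poly Q y = (y + c) gchoose j"
    unfolding Q_def gbinomial_prod_rev by (simp add: poly_prod algebra_simps)
qed

lemma Phi_poly:
  fixes p :: real and d n k t :: nat
  shows "\<exists>P :: complex poly. degree P \<le> k \<and> (\<forall>x::int. Phi p d t n k x = poly P (of_int x))"
proof -
  define G where "G = (1 + fps_const (of_nat d) * fps_X) * inverse ((1 + fps_const (complex_of_real p) * fps_X) ^ t)"
  define c :: complex where "c = of_int (int d * (int n - 1) - 1 - int (d - 1) * int k)"
  have "\<forall>j. \<exists>Q :: complex poly. degree Q \<le> j \<and> (\<forall>y. poly Q y = (y + c) gchoose j)"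
    using gchoose_poly by blast
  then obtain Qf where Qf: "\<And>j. degree (Qf j) \<le> j" "\<And>j y. poly (Qf j) y = (y + c) gchoose j"
    by metis
  define P where "P = smult ((-1) ^ k) (\<Sum>i\<in>{0..k}. smult (G $ i) (Qf (k - i)))"
  show ?thesis
  proof (intro exI conjI allI)
    have "degree P \<le> degree (\<Sum>i\<in>{0..k}. smult (G $ i) (Qf (k - i)))"
      unfolding P_def by (rule degree_smult_le)
    also have "\<dots> \<le> k"
    proof (rule degree_sum_le)
      fix i assume "i \<in> {0..k}"
      have "degree (smult (G $ i) (Qf (k - i))) \<le> degree (Qf (k - i))" by (rule degree_smult_le)
      also have "\<dots> \<le> k - i" by (rule Qf(1))
      finally show "degree (smult (G $ i) (Qf (k - i))) \<le> k" by simp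
    qed simp
    finally show "degree P \<le> k" .
  next
    fix x :: int
    have "Phi p d t n k x = (-1) ^ k * (G * fps_binomial (of_int (x + int d * (int n - 1) - 1 - int (d - 1) * int k))) $ k"
      unfolding Phi_def Let_def G_def by (simp only: Phi_residue)
    also have "of_int (x + int d * (int n - 1) - 1 - int (d - 1) * int k) = (of_int x + c :: complex)"
      unfolding c_def by simp
    also have "(-1) ^ k * (G * fps_binomial (of_int x + c)) $ k = poly P (of_int x)"
      unfolding P_def by (simp add: fps_mult_nth poly_sum Qf(2))
    finally show "Phi p d t n k x = poly P (of_int x)" .
  qed
qed



lemma binom_key: "(d * Suc m choose Suc m) = d * (d * Suc m - 1 choose m)"
proof -
  have "Suc m * (d * Suc m choose Suc m) = d * Suc m * ((d * Suc m - 1) choose m)"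
    by (rule binomial_absorption)
  hence "Suc m * (d * Suc m choose Suc m) = Suc m * (d * ((d * Suc m - 1) choose m))"
    by (simp add: algebra_simps)
  thus ?thesis by (simp only: mult_cancel1) simp
qed

lemma delta_lemma:
  fixes d j k :: nat
  assumes "d \<ge> 1"
  shows "(fps_X ^ k * ((1 + fps_const (of_nat d) * fps_X) *
      fps_binomial (of_int (int (d - 1) * int k - 1 - int (d - 1) * int j) :: complex))) $ j
     = (if j = k then 1 else 0)"
proof -
  define B where "B = fps_binomial (of_int (int (d - 1) * int k - 1 - int (d - 1) * int j) :: complex)"
  have nth: "((1 + fps_const (of_nat d) * fps_X) * B) $ r = B $ r + of_nat d * (if r = 0 then 0 else B $ (r - 1))" for r
    by (simp add: distrib_right mult.assoc fps_X_mult_nth)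
  consider "j < k" | "j = k" | "j > k" by linarith
  then show ?thesis
  proof cases
    case 1 thus ?thesis unfolding B_def[symmetric] by (simp add: fps_X_power_mult_nth)
  next
    case 2 thus ?thesis unfolding B_def[symmetric] by (simp add: fps_X_power_mult_nth nth B_def)
  next
    case 3
    then obtain m where m: "j - k = Suc m" by (metis Suc_diff_Suc)
    have a: "of_int (int (d - 1) * int k - 1 - int (d - 1) * int j) = - (of_nat ((d - 1) * Suc m) + 1 :: complex)"
    proof -
      have "int (d - 1) * int k - 1 - int (d - 1) * int j = - (int ((d - 1) * Suc m) + 1)"
      proof -
        have hs: "int (Suc m) = int j - int k" using 3 m by simp
        show ?thesis unfolding of_nat_mult hs by (simp add: algebra_simps)
      qed
      hence "(of_int (int (d - 1) * int k - 1 - int (d - 1) * int j) :: complex) = of_int (- (int ((d - 1) * Suc m) + 1))"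
        by (rule arg_cong)
      thus ?thesis by (simp only: of_int_minus of_int_add of_int_of_nat_eq of_int_1)
    qed
    have n1: "Suc m + (d - 1) * Suc m = d * Suc m" using assms by (cases d) auto
    have n2: "m + (d - 1) * Suc m = d * Suc m - 1" using assms by (cases d) auto
    have c1: "of_nat (Suc m) - (- (of_nat ((d - 1) * Suc m) + 1)) - 1 = (of_nat (d * Suc m) :: complex)"
    proof -
      have "(of_nat (d * Suc m) :: complex) = of_nat (Suc m + (d - 1) * Suc m)" by (simp only: n1)
      thus ?thesis by (simp only: of_nat_add) simp
    qed
    have c2: "of_nat m - (- (of_nat ((d - 1) * Suc m) + 1)) - 1 = (of_nat (d * Suc m - 1) :: complex)"
    proof -
      have "(of_nat (d * Suc m - 1) :: complex) = of_nat (m + (d - 1) * Suc m)" by (simp only: n2)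
      thus ?thesis by (simp only: of_nat_add) simp
    qed
    have e1: "B $ Suc m = (-1) ^ Suc m * of_nat (d * Suc m choose Suc m)"
      unfolding B_def fps_binomial_nth a
      by (subst gbinomial_negated_upper) (simp only: c1 binomial_gbinomial)
    have e2: "B $ m = (-1) ^ m * of_nat (d * Suc m - 1 choose m)"
      unfolding B_def fps_binomial_nth a
      by (subst gbinomial_negated_upper) (simp only: c2 binomial_gbinomial)
    have "(fps_X ^ k * ((1 + fps_const (of_nat d) * fps_X) * B)) $ j = B $ Suc m + of_nat d * B $ m"
      using 3 m by (simp add: fps_X_power_mult_nth nth)
    also have "\<dots> = 0"
      unfolding e1 e2 binom_key by simp
    finally show ?thesis using 3 unfolding B_def by simp
  qed
qed



lemma fps_const_sum': "fps_const (sum f S) = (\<Sum>i\<in>S. fps_const (f i) :: complex fps)"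
  by (induct S rule: infinite_finite_induct) (auto simp flip: fps_const_add)

lemma map_poly_fps_const_mult:
  "map_poly fps_const (A * B) = map_poly fps_const A * map_poly (fps_const :: complex \<Rightarrow> complex fps) B"
  by (rule poly_eqI) (simp add: coeff_map_poly coeff_mult fps_const_sum')

lemma map_poly_fps_const_power:
  "map_poly fps_const (A ^ t) = map_poly (fps_const :: complex \<Rightarrow> complex fps) A ^ t"
  by (induct t) (simp_all add: map_poly_fps_const_mult)

lemma eval_Apoly:
  "poly (map_poly fps_const (Apoly p d t k)) (1 + fps_X)
     = (1 + fps_const (complex_of_real p) * fps_X) ^ t * (fps_X ^ k * (1 + fps_X) ^ ((d - 1) * k))"
proof -
  have m: "map_poly fps_const (Apoly p d t k) =
     [:fps_const (1 - complex_of_real p), fps_const (complex_of_real p):] ^ t * ([:-1, 1:] * monom 1 (d - 1)) ^ k"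
  proof -
    have l1: "map_poly fps_const [:1 - complex_of_real p, complex_of_real p:] =
       [:fps_const (1 - complex_of_real p), fps_const (complex_of_real p):]"
      by (simp add: map_poly_pCons)
    have l2: "map_poly fps_const [:-1, 1 :: complex:] = [:-1, 1:]"
      by (simp add: map_poly_pCons)
    have l3: "map_poly fps_const (monom (1 :: complex) (d - 1)) = monom 1 (d - 1)"
      by (simp add: map_poly_monom)
    show ?thesis unfolding Apoly_def
      by (simp only: map_poly_fps_const_mult map_poly_fps_const_power l1 l2 l3)
  qed
  have c: "fps_const (1 - complex_of_real p) = 1 - fps_const (complex_of_real p)"
    by (simp flip: fps_const_sub)
  show ?thesis unfolding m
    by (simp add: poly_monom c power_mult_distrib algebra_simps flip: power_mult)
qed

lemma sum_eval:
  fixes A :: "complex poly" and H Y :: "complex fps"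
  shows "(\<Sum>i\<in>{0..degree A}. coeff A i * (H * Y ^ i) $ j) = (H * poly (map_poly fps_const A) Y) $ j"
proof -
  have "poly (map_poly fps_const A) Y = (\<Sum>i\<le>degree A. fps_const (coeff A i) * Y ^ i)"
    by (simp add: poly_altdef coeff_map_poly degree_map_poly)
  hence "H * poly (map_poly fps_const A) Y = (\<Sum>i\<le>degree A. fps_const (coeff A i) * (H * Y ^ i))"
    by (simp add: sum_distrib_left mult_ac)
  thus ?thesis by (simp add: fps_sum_nth atLeast0AtMost)
qed



lemma Phi_shift:
  fixes p :: real and d n j t i :: nat
  shows "Phi p d t n j (int i - int d * (int n - 1)) = (-1) ^ j *
     ((1 + fps_const (of_nat d) * fps_X) * inverse ((1 + fps_const (complex_of_real p) * fps_X) ^ t)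
       * fps_binomial (of_int (- 1 - int (d - 1) * int j)) * (1 + fps_X) ^ i) $ j"
proof -
  have "Phi p d t n j (int i - int d * (int n - 1)) = (-1) ^ j *
     ((1 + fps_const (of_nat d) * fps_X) * inverse ((1 + fps_const (complex_of_real p) * fps_X) ^ t)
       * fps_binomial (of_int (int i - 1 - int (d - 1) * int j))) $ j"
    unfolding Phi_def Let_def by (simp only: Phi_residue diff_add_cancel)
  also have "fps_binomial (of_int (int i - 1 - int (d - 1) * int j) :: complex)
      = (1 + fps_X) ^ i * fps_binomial (of_int (- 1 - int (d - 1) * int j))"
  proof -
    have "(of_int (int i - 1 - int (d - 1) * int j) :: complex) = of_nat i + of_int (- 1 - int (d - 1) * int j)"
      by simp
    thus ?thesis by (simp only: fps_binomial_add_mult fps_binomial_of_nat)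
  qed
  finally show ?thesis by (simp only: mult_ac)
qed

lemma biorth:
  fixes p :: real and d n j k t :: nat
  assumes "p < 1" "d \<ge> 1" "j < n" "k < n"
  shows "((\<lambda>x::int. Phi p d t n j x * Psi p d t n k x) has_sum (if j = k then 1 else 0)) UNIV"
proof -
  define D where "D = int d * (int n - 1)"
  define A where "A = Apoly p d t k"
  define S where "S = (\<lambda>i. int i - D) ` {0..degree A}"
  define f where "f = (\<lambda>x::int. Phi p d t n j x * Psi p d t n k x)"
  define Q where "Q = (1 + fps_const (complex_of_real p) * fps_X) ^ t"
  define C where "C = fps_binomial (of_int (- 1 - int (d - 1) * int j) :: complex)"
  define H where "H = (1 + fps_const (of_nat d) * fps_X) * inverse Q * C"
  have Psi': "Psi p d t n k x = (-1) ^ k * (if x + D \<ge> 0 then coeff A (nat (x + D)) else 0)" for x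
    unfolding D_def A_def using Psi_coeff[OF assms(1) assms(4) assms(2)] .
  have zero: "f x = 0" if "x \<notin> S" for x
  proof -
    have "Psi p d t n k x = 0"
    proof (cases "x + D \<ge> 0")
      case True
      have "nat (x + D) \<notin> {0..degree A}"
      proof
        assume "nat (x + D) \<in> {0..degree A}"
        hence "x \<in> S" unfolding S_def using True by (intro image_eqI[of _ _ "nat (x + D)"]) auto
        thus False using that by simp
      qed
      hence "coeff A (nat (x + D)) = 0" by (intro coeff_eq_0) auto
      thus ?thesis unfolding Psi' by simp
    qed (simp add: Psi')
    thus ?thesis unfolding f_def by simp
  qed
  have "(f has_sum (if j = k then 1 else 0)) UNIV \<longleftrightarrow> (f has_sum (if j = k then 1 else 0)) S"
    by (rule has_sum_cong_neutral) (use zero in auto)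
  moreover have "sum f S = (if j = k then 1 else 0)"
  proof -
    have inj: "inj_on (\<lambda>i. int i - D) {0..degree A}" by (auto simp: inj_on_def)
    have "sum f S = (\<Sum>i\<in>{0..degree A}. f (int i - D))"
      unfolding S_def by (simp add: sum.reindex[OF inj])
    also have "\<dots> = (\<Sum>i\<in>{0..degree A}. (-1) ^ (j + k) * (coeff A i * (H * (1 + fps_X) ^ i) $ j))"
    proof (intro sum.cong refl)
      fix i assume "i \<in> {0..degree A}"
      have "f (int i - D) = ((-1) ^ j * (H * (1 + fps_X) ^ i) $ j) * ((-1) ^ k * coeff A i)"
        unfolding f_def Psi' unfolding H_def Q_def C_def D_def by (simp only: Phi_shift) simp
      thus "f (int i - D) = (-1) ^ (j + k) * (coeff A i * (H * (1 + fps_X) ^ i) $ j)"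
        by (simp add: power_add mult_ac)
    qed
    also have "\<dots> = (-1) ^ (j + k) * (H * poly (map_poly fps_const A) (1 + fps_X)) $ j"
      by (simp add: sum_distrib_left[symmetric] sum_eval)
    also have "H * poly (map_poly fps_const A) (1 + fps_X) =
        fps_X ^ k * ((1 + fps_const (of_nat d) * fps_X) *
        fps_binomial (of_int (int (d - 1) * int k - 1 - int (d - 1) * int j)))"
    proof -
      have iq: "inverse Q * Q = 1" unfolding Q_def by (intro inverse_mult_eq_1) simp
      have cb: "C * (1 + fps_X) ^ ((d - 1) * k) = fps_binomial (of_int (int (d - 1) * int k - 1 - int (d - 1) * int j))"
      proof -
        have "(of_int (int (d - 1) * int k - 1 - int (d - 1) * int j) :: complex)
            = of_int (- 1 - int (d - 1) * int j) + of_nat ((d - 1) * k)"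
          by simp
        thus ?thesis unfolding C_def by (simp only: fps_binomial_add_mult fps_binomial_of_nat)
      qed
      have "H * poly (map_poly fps_const A) (1 + fps_X) =
          (fps_X ^ k * (1 + fps_const (of_nat d) * fps_X)) * (inverse Q * Q) * (C * (1 + fps_X) ^ ((d - 1) * k))"
        unfolding A_def eval_Apoly H_def Q_def by (simp only: mult_ac)
      also have "\<dots> = fps_X ^ k * ((1 + fps_const (of_nat d) * fps_X) *
        fps_binomial (of_int (int (d - 1) * int k - 1 - int (d - 1) * int j)))"
        unfolding iq cb by (simp only: mult_ac mult_1_right mult_1_left)
      finally show ?thesis .
    qed
    also have "(-1) ^ (j + k) * (fps_X ^ k * ((1 + fps_const (of_nat d) * fps_X) *
        fps_binomial (of_int (int (d - 1) * int k - 1 - int (d - 1) * int j) :: complex))) $ j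
        = (if j = k then 1 else 0)"
      unfolding delta_lemma[OF assms(2)] by simp
    finally show ?thesis .
  qed
  moreover have "(f has_sum sum f S) S" unfolding S_def by (rule has_sum_finite) simp
  ultimately show ?thesis unfolding f_def[symmetric] by simp
qed


theorem lemma4p1:
  fixes p :: real and d N t :: nat
  assumes "0 < p" "p < 1" "d \<ge> 2" "N \<ge> 1"
  shows "\<forall>n\<in>{1..N}.
     (\<forall>k<n. \<forall>x::int.
        Psi p d t n k x =
          (-1) ^ k * residue (\<lambda>w. (1 + complex_of_real p * (w - 1)) ^ t * ((w - 1) * w ^ (d - 1)) ^ k
                      / w powi (x + int d * (int n - 1) + 1)) 0)
   \<and> (\<forall>k<n. \<exists>P :: complex poly. degree P \<le> n - 1 \<and> (\<forall>x::int. Phi p d t n k x = poly P (of_int x)))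
   \<and> (\<forall>j<n. \<forall>k<n. ((\<lambda>x::int. Phi p d t n j x * Psi p d t n k x) has_sum (if j = k then 1 else 0)) UNIV)"
proof (intro ballI conjI allI impI)
  have d1: "d \<ge> 1" using assms(3) by simp
  fix n assume "n \<in> {1..N}"
  {
    fix k x assume "k < n"
    show "Psi p d t n k x =
          (-1) ^ k * residue (\<lambda>w. (1 + complex_of_real p * (w - 1)) ^ t * ((w - 1) * w ^ (d - 1)) ^ k
                      / w powi (x + int d * (int n - 1) + 1)) 0"
      by (rule Psi_part1[OF assms(2) \<open>k < n\<close> d1])
  next
    fix k assume "k < n"
    obtain P :: "complex poly" where P: "degree P \<le> k" "\<forall>x::int. Phi p d t n k x = poly P (of_int x)"
      using Phi_poly by blast
    show "\<exists>P :: complex poly. degree P \<le> n - 1 \<and> (\<forall>x::int. Phi p d t n k x = poly P (of_int x))"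
      using P \<open>k < n\<close> by (intro exI[of _ P]) auto
  next
    fix j k assume "j < n" "k < n"
    show "((\<lambda>x::int. Phi p d t n j x * Psi p d t n k x) has_sum (if j = k then 1 else 0)) UNIV"
      by (rule biorth[OF assms(2) d1 \<open>j < n\<close> \<open>k < n\<close>])
  }
qed

end
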